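(* As formal power series in $t$, $$1+\sum_{n\ge1}\sum_{\sigma\in \mathfrak{S}_n} x^{\operatorname{exc}\sigma} y^{\operatorname{fix}\sigma}q^{\operatorname{inv}\sigma} t^n =\cfrac{1}{1-b_0t-\cfrac{a_0c_1t^2}{1-b_1t-\cfrac{a_1c_2t^2}{\ddots}}},$$ where $a_h=x q^h [h+1]_{q}$, $b_h = yq^{2h} + (1+x) q^h [h]_{q}$, and $c_h= q^h [h]_{q}$.
   Context: $\mathfrak{S}_n$ is the set of permutations of $[n]$; $\operatorname{exc}\sigma=\#\{i:\sigma_i>i\}$, $\operatorname{fix}\sigma=\#\{i:\sigma_i=i\}$, $\operatorname{inv}\sigma=\#\{(i,j):i<j,\ \sigma_i>\sigma_j\}$. $[m]_q=1+q+\cdots+q^{m-1}$. *)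

theory Defs
  imports "HOL-Computational_Algebra.Formal_Power_Series" "HOL-Combinatorics.Permutations"
begin

definition exc :: "nat \<Rightarrow> (nat \<Rightarrow> nat) \<Rightarrow> nat" where
  "exc n \<sigma> = card {i \<in> {1..n}. \<sigma> i > i}"

definition fixpts :: "nat \<Rightarrow> (nat \<Rightarrow> nat) \<Rightarrow> nat" where
  "fixpts n \<sigma> = card {i \<in> {1..n}. \<sigma> i = i}"

definition inv :: "nat \<Rightarrow> (nat \<Rightarrow> nat) \<Rightarrow> nat" where
  "inv n \<sigma> = card {(i, j). i \<in> {1..n} \<and> j \<in> {1..n} \<and> i < j \<and> \<sigma> i > \<sigma> j}"

definition qint :: "'a::comm_semiring_1 \<Rightarrow> nat \<Rightarrow> 'a" where
  "qint q m = (\<Sum>i<m. q ^ i)"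

text \<open>Convergents of the J-fraction
  1/(1 - b_h t - lam_{h+1} t^2/(1 - b_{h+1} t - lam_{h+2} t^2/ ...)),
  truncated after k levels (innermost tail replaced by 0).
  Here lam (h+1) is the numerator a_h c_{h+1}.\<close>
fun jconv :: "(nat \<Rightarrow> 'a::field) \<Rightarrow> (nat \<Rightarrow> 'a) \<Rightarrow> nat \<Rightarrow> nat \<Rightarrow> 'a fps" where
  "jconv b lam 0 h = 0"
| "jconv b lam (Suc k) h =
     inverse (1 - fps_const (b h) * fps_X - fps_const (lam (Suc h)) * fps_X ^ 2 * jconv b lam k (Suc h))"

text \<open>The value of the infinite J-fraction is the limit (in the fps topology, i.e.
  coefficientwise stabilisation) of its convergents.\<close>

end

theory Submission
  imports Defs
begin


lemma fps_tendsto_coeffs: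
  fixes f :: "nat \<Rightarrow> 'a::group_add fps"
  assumes "\<And>k n. n < k \<Longrightarrow> fps_nth (f k) n = fps_nth g n"
  shows "f \<longlonglongrightarrow> g"
proof -
  have "\<exists>n0. \<forall>n \<ge> n0. dist (f n) g < r" if "r > 0" for r
  proof -
    obtain n0 where n0: "(1/2)^n0 < r" "n0 > 0"
      using reals_power_lt_ex[OF \<open>r > 0\<close>, of 2] by auto
    have "dist (f n) g < r" if nn0: "n \<ge> n0" for n
    proof (cases "f n = g")
      case True
      then show ?thesis using \<open>r > 0\<close> by simp
    next
      case False
      have kn: "subdegree (f n - g) \<ge> n"
      proof (cases n)
        case 0 then show ?thesis by simp
      next
        case (Suc m)
        have "subdegree (f n - g) > m"
          by (rule subdegree_greaterI) (use False assms Suc in auto)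
        then show ?thesis using Suc by simp
      qed
      have "dist (f n) g = (1/2)^subdegree (f n - g)"
        using False by (simp add: dist_fps_def field_simps)
      also have "\<dots> \<le> (1/2)^n" using kn by (simp add: power_decreasing)
      also have "\<dots> \<le> (1/2)^n0" using nn0 by (simp add: power_decreasing)
      also have "\<dots> < r" using n0 by simp
      finally show ?thesis .
    qed
    then show ?thesis by blast
  qed
  then show ?thesis unfolding lim_sequentially by blast
qed

fun Pm :: "(nat \<Rightarrow> 'a::comm_ring_1) \<Rightarrow> (nat \<Rightarrow> 'a) \<Rightarrow> (nat \<Rightarrow> 'a) \<Rightarrow> nat \<Rightarrow> nat \<Rightarrow> 'a" where
  "Pm a b c 0 k = (if k = 0 then 1 else 0)"
| "Pm a b c (Suc n) k = (if k = 0 then 0 else a (k - 1) * Pm a b c n (k - 1))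
      + b k * Pm a b c n k + c (Suc k) * Pm a b c n (Suc k)"

fun Gs :: "(nat \<Rightarrow> 'a::field) \<Rightarrow> (nat \<Rightarrow> 'a) \<Rightarrow> (nat \<Rightarrow> 'a) \<Rightarrow> nat \<Rightarrow> nat \<Rightarrow> 'a fps" where
  "Gs a b lam K 0 = jconv b lam K 0"
| "Gs a b lam K (Suc k) = Gs a b lam K k * (fps_X * (fps_const (a k) * jconv b lam (K - Suc k) (Suc k)))"

declare Gs.simps[simp del]

lemma ring_aux2: "(G::'b::comm_ring_1) = G * (1 - P - Q) + G * (P + Q)"
  by (simp add: algebra_simps)

lemma ring_aux: "(G::'b::comm_ring) * (B*X + (A*C)*(X*X)*F) = X*(B*G) + X*(C*(G*(X*(A*F))))"
  by (simp add: algebra_simps)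

lemma Gs_key:
  fixes a b c lam :: "nat \<Rightarrow> 'a::field"
  assumes lam: "\<And>h. lam (Suc h) = a h * c (Suc h)" and kK: "k < K"
  shows "Gs a b lam K k = (if k = 0 then 1 else fps_X * (fps_const (a (k - 1)) * Gs a b lam K (k - 1)))
     + fps_X * (fps_const (b k) * Gs a b lam K k) + fps_X * (fps_const (c (Suc k)) * Gs a b lam K (Suc k))"
proof -
  define F where "F = jconv b lam (K - Suc k) (Suc k)"
  define D where "D = 1 - fps_const (b k) * fps_X - fps_const (lam (Suc k)) * fps_X ^ 2 * F"
  have KS: "K - k = Suc (K - Suc k)" using kK by simp
  have Fk: "jconv b lam (K - k) k = inverse D"
    unfolding KS D_def F_def by (simp only: jconv.simps)
  have D0: "fps_nth D 0 = 1" by (simp add: D_def)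
  have ID: "inverse D * D = 1" by (rule inverse_mult_eq_1) (simp add: D0)
  have GD: "Gs a b lam K k * D = (if k = 0 then 1 else fps_X * (fps_const (a (k - 1)) * Gs a b lam K (k - 1)))"
  proof (cases k)
    case 0
    then show ?thesis using Fk ID by (simp add: Gs.simps)
  next
    case (Suc j)
    have "Gs a b lam K k * D = Gs a b lam K j * (fps_X * (fps_const (a j) * (jconv b lam (K - k) k * D)))"
      using Suc by (simp add: mult.assoc Gs.simps)
    also have "\<dots> = Gs a b lam K j * (fps_X * fps_const (a j))"
      unfolding Fk ID by simp
    finally show ?thesis using Suc by (simp add: mult.commute mult.left_commute)
  qed
  have GS: "Gs a b lam K (Suc k) = Gs a b lam K k * (fps_X * (fps_const (a k) * F))"
    by (simp add: F_def Gs.simps)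
  have E1: "Gs a b lam K k = Gs a b lam K k * D + Gs a b lam K k * (fps_const (b k) * fps_X + fps_const (lam (Suc k)) * fps_X ^ 2 * F)"
    unfolding D_def by (rule ring_aux2)
  have E2: "Gs a b lam K k * (fps_const (b k) * fps_X + fps_const (lam (Suc k)) * fps_X ^ 2 * F)
     = fps_X * (fps_const (b k) * Gs a b lam K k) + fps_X * (fps_const (c (Suc k)) * Gs a b lam K (Suc k))"
    unfolding GS lam
  proof -
    have e: "fps_const (a k * c (Suc k)) = fps_const (a k) * fps_const (c (Suc k))" by simp
    show "Gs a b lam K k * (fps_const (b k) * fps_X + fps_const (a k * c (Suc k)) * fps_X\<^sup>2 * F) =
      fps_X * (fps_const (b k) * Gs a b lam K k) +
      fps_X * (fps_const (c (Suc k)) * (Gs a b lam K k * (fps_X * (fps_const (a k) * F))))"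
      unfolding e power2_eq_square by (rule ring_aux)
  qed
  from E1 have "Gs a b lam K k = (if k = 0 then 1 else fps_X * (fps_const (a (k - 1)) * Gs a b lam K (k - 1)))
     + (fps_X * (fps_const (b k) * Gs a b lam K k) + fps_X * (fps_const (c (Suc k)) * Gs a b lam K (Suc k)))"
    by (simp only: E2 GD)
  then show ?thesis by (simp only: add.assoc)
qed

lemma Gs_coeff:
  fixes a b c lam :: "nat \<Rightarrow> 'a::field"
  assumes lam: "\<And>h. lam (Suc h) = a h * c (Suc h)"
  shows "n + k < K \<Longrightarrow> fps_nth (Gs a b lam K k) n = Pm a b c n k"
proof (induction n arbitrary: k)
  case 0
  then show ?case by (subst Gs_key[where lam=lam and a=a and c=c, OF lam]) auto
next
  case (Suc n)
  have "fps_nth (Gs a b lam K k) (Suc n) = (if k = 0 then 0 else a (k - 1) * fps_nth (Gs a b lam K (k - 1)) n)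
      + b k * fps_nth (Gs a b lam K k) n + c (Suc k) * fps_nth (Gs a b lam K (Suc k)) n"
    by (subst Gs_key[where lam=lam and a=a and c=c, OF lam]) (use Suc.prems in auto)
  also have "\<dots> = Pm a b c (Suc n) k"
  proof -
    have 1: "fps_nth (Gs a b lam K (Suc k)) n = Pm a b c n (Suc k)"
      by (rule Suc.IH) (use Suc.prems in simp)
    have 2: "fps_nth (Gs a b lam K k) n = Pm a b c n k"
      by (rule Suc.IH) (use Suc.prems in simp)
    have 3: "k > 0 \<Longrightarrow> fps_nth (Gs a b lam K (k - 1)) n = Pm a b c n (k - 1)"
      by (rule Suc.IH) (use Suc.prems in simp)
    show ?thesis
    proof (cases k)
      case 0
      then show ?thesis using 1 2 by (simp only: Pm.simps if_True) simp
    next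
      case (Suc j)
      then show ?thesis using 1 2 3 by (simp only: Pm.simps)
    qed
  qed
  finally show ?case .
qed

lemma jconv_coeff:
  fixes a b c lam :: "nat \<Rightarrow> 'a::field"
  assumes lam: "\<And>h. lam (Suc h) = a h * c (Suc h)" and "n < K"
  shows "fps_nth (jconv b lam K 0) n = Pm a b c n 0"
  using Gs_coeff[where lam=lam and a=a and c=c and n=n and k=0 and K=K, OF lam] assms by (simp add: Gs.simps)



definition matching :: "nat \<Rightarrow> (nat \<times> nat) set \<Rightarrow> bool" where
  "matching n R \<longleftrightarrow> R \<subseteq> {1..n} \<times> {1..n} \<and> (\<forall>i u v. (i,u)\<in>R \<longrightarrow> (i,v)\<in>R \<longrightarrow> u = v)
      \<and> (\<forall>i j v. (i,v)\<in>R \<longrightarrow> (j,v)\<in>R \<longrightarrow> i = j)"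

definition PM :: "nat \<Rightarrow> (nat \<times> nat) set set" where "PM n = {R. matching n R}"
definition pv :: "nat \<Rightarrow> (nat \<times> nat) set \<Rightarrow> nat set" where "pv n R = {v\<in>{1..n}. v \<notin> Range R}"
definition pp :: "nat \<Rightarrow> (nat \<times> nat) set \<Rightarrow> nat set" where "pp n R = {i\<in>{1..n}. i \<notin> Domain R}"
definition ext :: "nat \<Rightarrow> (nat \<times> nat) set \<Rightarrow> nat \<times> nat \<Rightarrow> (nat \<times> nat) set" where
  "ext m R ch = R \<union> (if fst ch = 0 then {} else {(m, fst ch)}) \<union> (if snd ch = 0 then {} else {(snd ch, m)})"
definition Ch :: "nat \<Rightarrow> (nat \<times> nat) set \<Rightarrow> (nat \<times> nat) set" where
  "Ch n R = insert (Suc n, Suc n) (insert 0 (pv n R) \<times> insert 0 (pp n R))"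
definition res :: "nat \<Rightarrow> (nat \<times> nat) set \<Rightarrow> (nat \<times> nat) set" where
  "res n R = R \<inter> ({1..n} \<times> {1..n})"
definition chR :: "nat \<Rightarrow> (nat \<times> nat) set \<Rightarrow> nat \<times> nat" where
  "chR m R = ((if m \<in> Domain R then THE u. (m,u)\<in>R else 0), (if m \<in> Range R then THE j. (j,m)\<in>R else 0))"

lemma chR_fst:
  assumes "matching m R" "(m,u) \<in> R" shows "fst (chR m R) = u"
proof -
  have "(THE u. (m,u)\<in>R) = u"
    by (rule the_equality) (use assms in \<open>auto simp: matching_def\<close>)
  then show ?thesis using assms by (auto simp: chR_def)
qed

lemma chR_snd:
  assumes "matching m R" "(j,m) \<in> R" shows "snd (chR m R) = j"
proof -
  have "(THE j. (j,m)\<in>R) = j"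
    by (rule the_equality) (use assms in \<open>auto simp: matching_def\<close>)
  then show ?thesis using assms by (auto simp: chR_def)
qed

lemma chR_fst0: "m \<notin> Domain R \<Longrightarrow> fst (chR m R) = 0" by (simp add: chR_def)
lemma chR_snd0: "m \<notin> Range R \<Longrightarrow> snd (chR m R) = 0" by (simp add: chR_def)

lemma chR_fst_in:
  assumes "matching m R" "fst (chR m R) \<noteq> 0" shows "(m, fst (chR m R)) \<in> R"
proof -
  have "m \<in> Domain R" using assms(2) by (auto simp: chR_def split: if_splits)
  then obtain u where "(m,u) \<in> R" by blast
  then show ?thesis using chR_fst[OF assms(1)] by simp
qed

lemma chR_snd_in:
  assumes "matching m R" "snd (chR m R) \<noteq> 0" shows "(snd (chR m R), m) \<in> R"
proof -
  have "m \<in> Range R" using assms(2) by (auto simp: chR_def split: if_splits)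
  then obtain j where "(j,m) \<in> R" by blast
  then show ?thesis using chR_snd[OF assms(1)] by simp
qed

lemma ext_res:
  assumes M: "matching (Suc n) R"
  shows "ext (Suc n) (res n R) (chR (Suc n) R) = R"
proof (rule set_eqI, rule iffI)
  fix p assume "p \<in> ext (Suc n) (res n R) (chR (Suc n) R)"
  then show "p \<in> R"
    using chR_fst_in[OF M] chR_snd_in[OF M] unfolding ext_def res_def
    by (auto split: if_splits)
next
  fix p assume p: "p \<in> R"
  obtain i v where pe: "p = (i,v)" by fastforce
  have iv: "i \<in> {1..Suc n}" "v \<in> {1..Suc n}" using M p pe by (auto simp: matching_def)
  show "p \<in> ext (Suc n) (res n R) (chR (Suc n) R)"
  proof (cases "i = Suc n")
    case True
    then have "fst (chR (Suc n) R) = v" using chR_fst[OF M] p pe by simp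
    then show ?thesis using True pe iv by (auto simp: ext_def)
  next
    case False
    show ?thesis
    proof (cases "v = Suc n")
      case True
      then have "snd (chR (Suc n) R) = i" using chR_snd[OF M] p pe by simp
      then show ?thesis using True pe iv by (auto simp: ext_def)
    next
      case F2: False
      then show ?thesis using False pe iv p by (auto simp: ext_def res_def)
    qed
  qed
qed

lemma matchingD:
  assumes "matching n R"
  shows "\<And>i v. (i,v) \<in> R \<Longrightarrow> i \<in> {1..n} \<and> v \<in> {1..n}"
    and "\<And>i u v. (i,u)\<in>R \<Longrightarrow> (i,v)\<in>R \<Longrightarrow> u = v"
    and "\<And>i j v. (i,v)\<in>R \<Longrightarrow> (j,v)\<in>R \<Longrightarrow> i = j"
  using assms unfolding matching_def by blast+

lemma res_matching:
  assumes "matching (Suc n) R" shows "matching n (res n R)"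
  using assms unfolding matching_def res_def by auto

lemma chR_Ch:
  assumes M: "matching (Suc n) R" shows "chR (Suc n) R \<in> Ch n (res n R)"
proof -
  let ?m = "Suc n"
  define \<alpha> where "\<alpha> = fst (chR ?m R)"
  define \<beta> where "\<beta> = snd (chR ?m R)"
  have ch: "chR ?m R = (\<alpha>, \<beta>)" by (simp add: \<alpha>_def \<beta>_def)
  have A: "\<alpha> = 0 \<or> \<alpha> = ?m \<or> \<alpha> \<in> pv n (res n R)"
  proof (cases "?m \<in> Domain R")
    case False then show ?thesis using chR_fst0 \<alpha>_def by simp
  next
    case True
    then obtain u where u: "(?m,u) \<in> R" by blast
    then have "\<alpha> = u" using chR_fst[OF M] \<alpha>_def by simp
    moreover have "u \<in> {1..?m}" using matchingD(1)[OF M u] by simp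
    moreover have "u \<notin> Range (res n R)"
    proof
      assume "u \<in> Range (res n R)"
      then obtain i where i: "(i,u) \<in> R" "i \<le> n" by (auto simp: res_def)
      with matchingD(3)[OF M i(1) u] show False by simp
    qed
    ultimately show ?thesis by (auto simp: pv_def)
  qed
  have B: "\<beta> = 0 \<or> \<beta> = ?m \<or> \<beta> \<in> pp n (res n R)"
  proof (cases "?m \<in> Range R")
    case False then show ?thesis using chR_snd0 \<beta>_def by simp
  next
    case True
    then obtain j where j: "(j,?m) \<in> R" by blast
    then have "\<beta> = j" using chR_snd[OF M] \<beta>_def by simp
    moreover have "j \<in> {1..?m}" using matchingD(1)[OF M j] by simp
    moreover have "j \<notin> Domain (res n R)"
    proof
      assume "j \<in> Domain (res n R)"
      then obtain v where v: "(j,v) \<in> R" "v \<le> n" by (auto simp: res_def)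
      with matchingD(2)[OF M v(1) j] show False by simp
    qed
    ultimately show ?thesis by (auto simp: pp_def)
  qed
  have AB: "\<alpha> = ?m \<longleftrightarrow> \<beta> = ?m"
  proof
    assume "\<alpha> = ?m"
    then have "(?m,?m) \<in> R" using chR_fst_in[OF M] \<alpha>_def by auto
    then show "\<beta> = ?m" using chR_snd[OF M] \<beta>_def by simp
  next
    assume "\<beta> = ?m"
    then have "(?m,?m) \<in> R" using chR_snd_in[OF M] \<beta>_def by auto
    then show "\<alpha> = ?m" using chR_fst[OF M] \<alpha>_def by simp
  qed
  have "pv n (res n R) \<subseteq> {1..n}" "pp n (res n R) \<subseteq> {1..n}" by (auto simp: pv_def pp_def)
  then show ?thesis unfolding ch Ch_def using A B AB by auto
qed

lemma Ch_cases:
  assumes "ch \<in> Ch n R"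
  obtains "ch = (Suc n, Suc n)"
    | "fst ch = 0 \<or> fst ch \<in> pv n R" "snd ch = 0 \<or> snd ch \<in> pp n R"
  using assms unfolding Ch_def by (cases ch) auto

lemma pv_sub: "pv n R \<subseteq> {1..n}" and pp_sub: "pp n R \<subseteq> {1..n}"
  by (auto simp: pv_def pp_def)

lemma ext_matching:
  assumes M: "matching n R" and ch: "ch \<in> Ch n R"
  shows "matching (Suc n) (ext (Suc n) R ch)"
  using ch
proof (cases rule: Ch_cases)
  case 1
  then show ?thesis using M unfolding matching_def ext_def by auto
next
  case 2
  obtain \<alpha> \<beta> where ab: "ch = (\<alpha>, \<beta>)" by fastforce
  have a: "\<alpha> = 0 \<or> (\<alpha> \<in> {1..n} \<and> \<alpha> \<notin> Range R)" using 2 ab by (auto simp: pv_def)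
  have b: "\<beta> = 0 \<or> (\<beta> \<in> {1..n} \<and> \<beta> \<notin> Domain R)" using 2 ab by (auto simp: pp_def)
  show ?thesis using M a b unfolding matching_def ext_def ab
    by (auto simp: Domain_iff Range_iff; fastforce)
qed

lemma res_ext:
  assumes M: "matching n R" and ch: "ch \<in> Ch n R"
  shows "res n (ext (Suc n) R ch) = R"
  using M unfolding matching_def res_def ext_def by auto

lemma chR_ext:
  assumes M: "matching n R" and ch: "ch \<in> Ch n R"
  shows "chR (Suc n) (ext (Suc n) R ch) = ch"
proof -
  have M': "matching (Suc n) (ext (Suc n) R ch)" by (rule ext_matching[OF M ch])
  obtain \<alpha> \<beta> where ab: "ch = (\<alpha>, \<beta>)" by fastforce
  have nm: "(Suc n, v) \<notin> R" "(v, Suc n) \<notin> R" for v using matchingD(1)[OF M] by force+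
  have b1: "\<beta> = Suc n \<Longrightarrow> \<alpha> = Suc n" and a1: "\<alpha> = Suc n \<Longrightarrow> \<beta> = Suc n"
    using ch pv_sub[of n R] pp_sub[of n R] unfolding ab Ch_def by auto
  have "fst (chR (Suc n) (ext (Suc n) R ch)) = \<alpha>"
  proof (cases "\<alpha> = 0")
    case True
    then have "Suc n \<notin> Domain (ext (Suc n) R ch)" using nm b1 unfolding ext_def ab by auto
    then show ?thesis using chR_fst0 True by simp
  next
    case False
    then have "(Suc n, \<alpha>) \<in> ext (Suc n) R ch" unfolding ext_def ab by simp
    then show ?thesis using chR_fst[OF M'] by simp
  qed
  moreover have "snd (chR (Suc n) (ext (Suc n) R ch)) = \<beta>"
  proof (cases "\<beta> = 0")
    case True
    then have "Suc n \<notin> Range (ext (Suc n) R ch)" using nm a1 unfolding ext_def ab by auto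
    then show ?thesis using chR_snd0 True by simp
  next
    case False
    then have "(\<beta>, Suc n) \<in> ext (Suc n) R ch" unfolding ext_def ab by simp
    then show ?thesis using chR_snd[OF M'] by simp
  qed
  ultimately show ?thesis using ab by (metis prod.collapse)
qed

lemma finite_PM: "finite (PM n)"
proof -
  have "PM n \<subseteq> Pow ({1..n} \<times> {1..n})" by (auto simp: PM_def matching_def)
  then show ?thesis by (rule finite_subset) simp
qed

lemma finite_Ch: "finite (Ch n R)"
  unfolding Ch_def using finite_subset[OF pv_sub] finite_subset[OF pp_sub] by auto

lemma sum_PM_Suc:
  "sum f (PM (Suc n)) = (\<Sum>(R,ch)\<in>Sigma (PM n) (Ch n). f (ext (Suc n) R ch))"
proof (rule sum.reindex_bij_witness[where j = "\<lambda>R. (res n R, chR (Suc n) R)" and i = "\<lambda>(R,ch). ext (Suc n) R ch"])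
  fix R assume "R \<in> PM (Suc n)"
  then have M: "matching (Suc n) R" by (simp add: PM_def)
  show "(case (res n R, chR (Suc n) R) of (R, ch) \<Rightarrow> ext (Suc n) R ch) = R" using ext_res[OF M] by simp
  show "(res n R, chR (Suc n) R) \<in> Sigma (PM n) (Ch n)"
    using res_matching[OF M] chR_Ch[OF M] by (simp add: PM_def)
  show "(case (res n R, chR (Suc n) R) of (R, ch) \<Rightarrow> f (ext (Suc n) R ch)) = f R" using ext_res[OF M] by simp
next
  fix p assume p: "p \<in> Sigma (PM n) (Ch n)"
  obtain R ch where pe: "p = (R, ch)" by (cases p) auto
  have M: "matching n R" and ch: "ch \<in> Ch n R" using p pe by (auto simp: PM_def)
  show "(res n (case p of (R, ch) \<Rightarrow> ext (Suc n) R ch), chR (Suc n) (case p of (R, ch) \<Rightarrow> ext (Suc n) R ch)) = p"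
    using res_ext[OF M ch] chR_ext[OF M ch] pe by simp
  show "(case p of (R, ch) \<Rightarrow> ext (Suc n) R ch) \<in> PM (Suc n)"
    using ext_matching[OF M ch] pe by (simp add: PM_def)
qed



definition gtv :: "(nat \<times> nat) set \<Rightarrow> nat \<Rightarrow> nat \<Rightarrow> bool" where
  "gtv R i v \<longleftrightarrow> i \<notin> Domain R \<or> (\<exists>u. (i,u) \<in> R \<and> v < u)"
definition gti :: "(nat \<times> nat) set \<Rightarrow> nat \<Rightarrow> nat \<Rightarrow> bool" where
  "gti R v i \<longleftrightarrow> v \<notin> Range R \<or> (\<exists>j. (j,v) \<in> R \<and> i < j)"

definition cexc :: "nat \<Rightarrow> (nat \<times> nat) set \<Rightarrow> nat" where
  "cexc n R = card {i\<in>{1..n}. gtv R i i}"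
definition cfix :: "nat \<Rightarrow> (nat \<times> nat) set \<Rightarrow> nat" where
  "cfix n R = card {i\<in>{1..n}. (i,i) \<in> R}"
definition cinv :: "nat \<Rightarrow> (nat \<times> nat) set \<Rightarrow> nat" where
  "cinv n R = card {p\<in>{1..n}\<times>{1..n}. gtv R (fst p) (snd p) \<and> gti R (snd p) (fst p)}"

lemma card_line_Suc:
  "card {i\<in>{1..Suc n}. P i} = card {i\<in>{1..n}. P i} + (if P (Suc n) then 1 else 0)"
proof -
  have "{i\<in>{1..Suc n}. P i} = {i\<in>{1..n}. P i} \<union> (if P (Suc n) then {Suc n} else {})"
    by (auto simp: le_Suc_eq)
  then show ?thesis by (simp add: card_Un_disjoint)
qed

lemma card_square_Suc:
  "card {p\<in>{1..Suc n}\<times>{1..Suc n}. P p} = card {p\<in>{1..n}\<times>{1..n}. P p}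
     + card {v\<in>{1..n}. P (Suc n, v)} + card {i\<in>{1..n}. P (i, Suc n)} + (if P (Suc n, Suc n) then 1 else 0)"
proof -
  let ?m = "Suc n"
  let ?A = "{p\<in>{1..n}\<times>{1..n}. P p}"
  let ?B = "Pair ?m ` {v\<in>{1..n}. P (?m, v)}"
  let ?C = "(\<lambda>i. (i, ?m)) ` {i\<in>{1..n}. P (i, ?m)}"
  let ?D = "(if P (?m, ?m) then {(?m,?m)} else {})"
  have eq: "{p\<in>{1..?m}\<times>{1..?m}. P p} = ((?A \<union> ?B) \<union> ?C) \<union> ?D"
    by (auto simp: le_Suc_eq)
  have cB: "card ?B = card {v\<in>{1..n}. P (?m, v)}" by (rule card_image) (simp add: inj_on_def)
  have cC: "card ?C = card {i\<in>{1..n}. P (i, ?m)}" by (rule card_image) (simp add: inj_on_def)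
  have "card (((?A \<union> ?B) \<union> ?C) \<union> ?D) = card ((?A \<union> ?B) \<union> ?C) + card ?D"
    by (rule card_Un_disjoint) auto
  also have "card ((?A \<union> ?B) \<union> ?C) = card (?A \<union> ?B) + card ?C"
    by (rule card_Un_disjoint) auto
  also have "card (?A \<union> ?B) = card ?A + card ?B"
    by (rule card_Un_disjoint) auto
  finally show ?thesis unfolding eq cB cC by simp
qed

lemma qint_Suc: "qint q (Suc k) = qint q k + q ^ k"
  by (simp add: qint_def)

lemma rank_sum:
  fixes q :: "'a::comm_semiring_1" and P :: "nat set"
  assumes "finite P"
  shows "(\<Sum>w\<in>P. q ^ card {v\<in>P. v < w}) = qint q (card P)"
  using assms
proof (induction "card P" arbitrary: P)
  case 0
  then show ?case by (simp add: qint_def)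
next
  case (Suc k)
  then have ne: "P \<noteq> {}" by auto
  define M where "M = Max P"
  have MP: "M \<in> P" using Suc.prems ne by (simp add: M_def)
  define P' where "P' = P - {M}"
  have cP': "card P' = k" using Suc.hyps(2) MP Suc.prems by (simp add: P'_def)
  have fP': "finite P'" using Suc.prems by (simp add: P'_def)
  have lt: "w \<in> P' \<Longrightarrow> w < M" for w
    using Suc.prems by (auto simp: P'_def M_def intro: Max_ge le_neq_trans)
  have Pins: "P = insert M P'" using MP by (auto simp: P'_def)
  have "(\<Sum>w\<in>P. q ^ card {v\<in>P. v < w}) = q ^ card {v\<in>P. v < M} + (\<Sum>w\<in>P'. q ^ card {v\<in>P. v < w})"
    unfolding P'_def by (rule sum.remove[OF Suc.prems MP])
  also have "(\<Sum>w\<in>P'. q ^ card {v\<in>P. v < w}) = (\<Sum>w\<in>P'. q ^ card {v\<in>P'. v < w})"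
  proof (rule sum.cong)
    fix w assume w: "w \<in> P'"
    then have "w < M" by (rule lt)
    then have "{v\<in>P. v < w} = {v\<in>P'. v < w}" using w by (auto simp: P'_def)
    then show "q ^ card {v\<in>P. v < w} = q ^ card {v\<in>P'. v < w}" by simp
  qed simp
  also have "\<dots> = qint q k" using Suc.hyps(1)[of P'] cP' fP' by simp
  also have "{v\<in>P. v < M} = P'" using lt by (auto simp: P'_def M_def Suc.prems)
  finally show ?case using cP' Suc.hyps(2)[symmetric] by (simp add: qint_Suc add.commute)
qed

locale extc =
  fixes n :: nat and R :: "(nat \<times> nat) set" and \<alpha> \<beta> :: nat
  assumes M: "matching n R" and ch: "(\<alpha>, \<beta>) \<in> Ch n R"
begin

abbreviation "m \<equiv> Suc n"
abbreviation "E \<equiv> ext (Suc n) R (\<alpha>, \<beta>)"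

lemma ME: "matching (Suc n) E" by (rule ext_matching[OF M ch])

lemma chc: "(\<alpha> = Suc n \<and> \<beta> = Suc n) \<or> ((\<alpha> = 0 \<or> (\<alpha> \<in> {1..n} \<and> \<alpha> \<notin> Range R)) \<and> (\<beta> = 0 \<or> (\<beta> \<in> {1..n} \<and> \<beta> \<notin> Domain R)))"
  using ch unfolding Ch_def pv_def pp_def by auto

lemma Rsub: "(i,v) \<in> R \<Longrightarrow> i \<in> {1..n} \<and> v \<in> {1..n}" using matchingD(1)[OF M] by blast
lemma Esub: "(i,v) \<in> E \<Longrightarrow> i \<in> {1..Suc n} \<and> v \<in> {1..Suc n}" using matchingD(1)[OF ME] by blast

lemma memE: "(i,v) \<in> E \<longleftrightarrow> (i,v) \<in> R \<or> (\<alpha> \<noteq> 0 \<and> i = Suc n \<and> v = \<alpha>) \<or> (\<beta> \<noteq> 0 \<and> i = \<beta> \<and> v = Suc n)"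
  by (auto simp: ext_def)

lemma gtv_ext: "i \<in> {1..n} \<Longrightarrow> v \<in> {1..n} \<Longrightarrow> gtv E i v \<longleftrightarrow> gtv R i v"
  using chc Rsub unfolding gtv_def Domain_iff memE by (auto; force)

lemma gti_ext: "i \<in> {1..n} \<Longrightarrow> v \<in> {1..n} \<Longrightarrow> gti E v i \<longleftrightarrow> gti R v i"
  using chc Rsub unfolding gti_def Range_iff memE by (auto; force)

lemma gtv_row: "gtv E (Suc n) v \<longleftrightarrow> (\<alpha> = 0 \<or> v < \<alpha>)"
  using chc Rsub unfolding gtv_def Domain_iff memE by (auto; force)

lemma gti_row: "v \<in> {1..n} \<Longrightarrow> gti E v (Suc n) \<longleftrightarrow> (v \<notin> Range R \<and> v \<noteq> \<alpha>)"
  using chc Rsub Esub unfolding gti_def Range_iff memE by (auto; force)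

lemma gtv_col: "i \<in> {1..n} \<Longrightarrow> gtv E i (Suc n) \<longleftrightarrow> (i \<notin> Domain R \<and> i \<noteq> \<beta>)"
  using chc Rsub Esub unfolding gtv_def Domain_iff memE by (auto; force)

lemma gti_col: "gti E (Suc n) i \<longleftrightarrow> (\<beta> = 0 \<or> i < \<beta>)"
  using chc Rsub unfolding gti_def Range_iff memE by (auto; force)

end


context extc begin

lemma cexc_ext: "cexc (Suc n) E = cexc n R + (if \<alpha> = 0 then 1 else 0)"
proof -
  have "{i\<in>{1..n}. gtv E i i} = {i\<in>{1..n}. gtv R i i}" using gtv_ext by auto
  moreover have "gtv E (Suc n) (Suc n) \<longleftrightarrow> \<alpha> = 0" using gtv_row chc by auto
  ultimately show ?thesis unfolding cexc_def card_line_Suc[where n=n] by simp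
qed

lemma cfix_ext: "cfix (Suc n) E = cfix n R + (if \<alpha> = Suc n then 1 else 0)"
proof -
  have "{i\<in>{1..n}. (i,i) \<in> E} = {i\<in>{1..n}. (i,i) \<in> R}" unfolding memE by auto
  moreover have "(Suc n, Suc n) \<in> E \<longleftrightarrow> \<alpha> = Suc n" unfolding memE using chc Rsub[of "Suc n" "Suc n"] by auto
  ultimately show ?thesis unfolding cfix_def card_line_Suc[where n=n] by simp
qed

lemma cinv_ext: "cinv (Suc n) E = cinv n R
   + card {v\<in>{1..n}. v \<notin> Range R \<and> v \<noteq> \<alpha> \<and> (\<alpha> = 0 \<or> v < \<alpha>)}
   + card {i\<in>{1..n}. i \<notin> Domain R \<and> i \<noteq> \<beta> \<and> (\<beta> = 0 \<or> i < \<beta>)}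
   + (if \<alpha> = 0 \<and> \<beta> = 0 then 1 else 0)"
proof -
  let ?P = "\<lambda>p. gtv E (fst p) (snd p) \<and> gti E (snd p) (fst p)"
  have 1: "{p\<in>{1..n}\<times>{1..n}. ?P p} = {p\<in>{1..n}\<times>{1..n}. gtv R (fst p) (snd p) \<and> gti R (snd p) (fst p)}"
    using gtv_ext gti_ext by auto
  have 2: "{v\<in>{1..n}. ?P (Suc n, v)} = {v\<in>{1..n}. v \<notin> Range R \<and> v \<noteq> \<alpha> \<and> (\<alpha> = 0 \<or> v < \<alpha>)}"
    using gtv_row gti_row by auto
  have 3: "{i\<in>{1..n}. ?P (i, Suc n)} = {i\<in>{1..n}. i \<notin> Domain R \<and> i \<noteq> \<beta> \<and> (\<beta> = 0 \<or> i < \<beta>)}"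
    using gtv_col gti_col by auto
  have 4: "?P (Suc n, Suc n) \<longleftrightarrow> \<alpha> = 0 \<and> \<beta> = 0" using gtv_row gti_col chc by auto
  show ?thesis unfolding cinv_def card_square_Suc[where P="?P" and n=n] 1 2 3 4 by simp
qed

lemma card_ext: "card E + (if \<alpha> = Suc n then 1 else 0) = card R + (if \<alpha> = 0 then 0 else 1) + (if \<beta> = 0 then 0 else 1)"
proof -
  have fR: "finite R" using M finite_subset[of R "{1..n}\<times>{1..n}"] by (auto simp: matching_def)
  have nR: "(Suc n, v) \<notin> R" "(v, Suc n) \<notin> R" for v using Rsub by force+
  show ?thesis
  proof (cases "\<alpha> = Suc n")
    case True
    then have "\<beta> = Suc n" using chc by auto
    then have "E = insert (Suc n, Suc n) R" using True by (auto simp: ext_def)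
    then show ?thesis using True \<open>\<beta> = Suc n\<close> fR nR by simp
  next
    case False
    then have b: "\<beta> \<noteq> Suc n" using chc by auto
    have "E = R \<union> (if \<alpha> = 0 then {} else {(Suc n, \<alpha>)}) \<union> (if \<beta> = 0 then {} else {(\<beta>, Suc n)})"
      by (simp add: ext_def)
    then show ?thesis using False b fR nR by (auto simp: card_insert_if)
  qed
qed

end



definition wt :: "'a::comm_ring_1 \<Rightarrow> 'a \<Rightarrow> 'a \<Rightarrow> nat \<Rightarrow> (nat \<times> nat) set \<Rightarrow> 'a" where
  "wt x y q n R = x ^ cexc n R * y ^ cfix n R * q ^ cinv n R"

definition rk :: "nat set \<Rightarrow> nat \<Rightarrow> nat" where "rk P w = card {v\<in>P. v < w}"

context extc begin

lemma wt_ext: "wt x y q (Suc n) E = wt x y q n R * (if \<alpha> = 0 then x else 1) * (if \<alpha> = Suc n then y else 1)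
   * q ^ (card {v\<in>{1..n}. v \<notin> Range R \<and> v \<noteq> \<alpha> \<and> (\<alpha> = 0 \<or> v < \<alpha>)}
   + card {i\<in>{1..n}. i \<notin> Domain R \<and> i \<noteq> \<beta> \<and> (\<beta> = 0 \<or> i < \<beta>)}
   + (if \<alpha> = 0 \<and> \<beta> = 0 then 1 else 0))"
  unfolding wt_def cexc_ext cfix_ext cinv_ext by (simp add: power_add algebra_simps)

end

lemma matching_card:
  assumes M: "matching n R"
  shows "card R \<le> n" "card (pv n R) = n - card R" "card (pp n R) = n - card R"
proof -
  have sub: "R \<subseteq> {1..n}\<times>{1..n}" using M by (simp add: matching_def)
  have fR: "finite R" using finite_subset[OF sub] by simp
  have injf: "inj_on fst R" using matchingD(2)[OF M] by (auto simp: inj_on_def)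
  have injs: "inj_on snd R" using matchingD(3)[OF M] by (auto simp: inj_on_def)
  have cD: "card (Domain R) = card R" using card_image[OF injf] by (simp add: fst_eq_Domain)
  have cR: "card (Range R) = card R" using card_image[OF injs] by (simp add: snd_eq_Range)
  have sD: "Domain R \<subseteq> {1..n}" and sR: "Range R \<subseteq> {1..n}" using sub by auto
  have "card (Domain R) \<le> card {1..n}" by (rule card_mono) (use sD in auto)
  then show "card R \<le> n" using cD by simp
  have "pp n R = {1..n} - Domain R" by (auto simp: pp_def)
  then show "card (pp n R) = n - card R" using card_Diff_subset[OF finite_subset[OF sD] sD] cD by simp
  have "pv n R = {1..n} - Range R" by (auto simp: pv_def)
  then show "card (pv n R) = n - card R" using card_Diff_subset[OF finite_subset[OF sR] sR] cR by simp
qed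


definition Gx :: "'a::comm_ring_1 \<Rightarrow> 'a \<Rightarrow> 'a \<Rightarrow> nat \<Rightarrow> nat \<Rightarrow> (nat \<times> nat) set \<Rightarrow> nat \<times> nat \<Rightarrow> 'a" where
  "Gx x y q n k R ch = (if card (ext (Suc n) R ch) + k = Suc n then wt x y q (Suc n) (ext (Suc n) R ch) else 0)"

lemma piece_mm:
  assumes M: "matching n R"
  shows "Gx x y q n k R (Suc n, Suc n) = (if n - card R = k then wt x y q n R * y * q ^ (2 * (n - card R)) else 0)"
proof -
  interpret e: extc n R "Suc n" "Suc n" by standard (fact M, simp add: Ch_def)
  have r: "{v\<in>{1..n}. v \<notin> Range R \<and> v \<noteq> Suc n \<and> (Suc n = 0 \<or> v < Suc n)} = pv n R" by (auto simp: pv_def)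
  have c: "{i\<in>{1..n}. i \<notin> Domain R \<and> i \<noteq> Suc n \<and> (Suc n = 0 \<or> i < Suc n)} = pp n R" by (auto simp: pp_def)
  have ce: "card e.E = card R + 1" using e.card_ext by simp
  show ?thesis using matching_card[OF M] unfolding Gx_def e.wt_ext r c ce
    by (auto simp: mult_2 power_add)
qed

lemma piece_00:
  assumes M: "matching n R"
  shows "Gx x y q n k R (0, 0) = (if n - card R + 1 = k then wt x y q n R * x * q ^ (2 * (n - card R) + 1) else 0)"
proof -
  interpret e: extc n R 0 0 by standard (fact M, simp add: Ch_def)
  have r: "{v\<in>{1..n}. v \<notin> Range R \<and> v \<noteq> 0 \<and> (0 = (0::nat) \<or> v < 0)} = pv n R" by (auto simp: pv_def)
  have c: "{i\<in>{1..n}. i \<notin> Domain R \<and> i \<noteq> 0 \<and> (0 = (0::nat) \<or> i < 0)} = pp n R" by (auto simp: pp_def)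
  have ce: "card e.E = card R" using e.card_ext by simp
  show ?thesis using matching_card[OF M] unfolding Gx_def e.wt_ext r c ce
    by (auto simp: mult_2 power_add)
qed

lemma piece_0b:
  assumes M: "matching n R" and b: "b \<in> pp n R"
  shows "Gx x y q n k R (0, b) = (if n - card R = k then wt x y q n R * x * q ^ (n - card R + rk (pp n R) b) else 0)"
proof -
  interpret e: extc n R 0 b by standard (fact M, use b in \<open>simp add: Ch_def\<close>)
  have b0: "b \<noteq> 0" "b \<le> n" using b by (auto simp: pp_def)
  have r: "{v\<in>{1..n}. v \<notin> Range R \<and> v \<noteq> 0 \<and> (0 = (0::nat) \<or> v < 0)} = pv n R" by (auto simp: pv_def)
  have c: "{i\<in>{1..n}. i \<notin> Domain R \<and> i \<noteq> b \<and> (b = 0 \<or> i < b)} = {i\<in>pp n R. i < b}" using b0 by (auto simp: pp_def)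
  have ce: "card e.E = card R + 1" using e.card_ext b0 by simp
  show ?thesis using matching_card[OF M] b0 unfolding Gx_def e.wt_ext r c ce rk_def
    by (auto simp: power_add)
qed

lemma piece_a0:
  assumes M: "matching n R" and a: "a \<in> pv n R"
  shows "Gx x y q n k R (a, 0) = (if n - card R = k then wt x y q n R * q ^ (rk (pv n R) a + (n - card R)) else 0)"
proof -
  interpret e: extc n R a 0 by standard (fact M, use a in \<open>simp add: Ch_def\<close>)
  have a0: "a \<noteq> 0" "a \<le> n" using a by (auto simp: pv_def)
  have r: "{v\<in>{1..n}. v \<notin> Range R \<and> v \<noteq> a \<and> (a = 0 \<or> v < a)} = {v\<in>pv n R. v < a}" using a0 by (auto simp: pv_def)
  have c: "{i\<in>{1..n}. i \<notin> Domain R \<and> i \<noteq> 0 \<and> (0 = (0::nat) \<or> i < 0)} = pp n R" by (auto simp: pp_def)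
  have ce: "card e.E = card R + 1" using e.card_ext a0 by simp
  show ?thesis using matching_card[OF M] a0 unfolding Gx_def e.wt_ext r c ce rk_def
    by (auto simp: power_add)
qed

lemma piece_ab:
  assumes M: "matching n R" and a: "a \<in> pv n R" and b: "b \<in> pp n R"
  shows "Gx x y q n k R (a, b) = (if n - card R = k + 1 then wt x y q n R * q ^ (rk (pv n R) a + rk (pp n R) b) else 0)"
proof -
  interpret e: extc n R a b by standard (fact M, use a b in \<open>simp add: Ch_def\<close>)
  have a0: "a \<noteq> 0" "a \<le> n" using a by (auto simp: pv_def)
  have b0: "b \<noteq> 0" "b \<le> n" using b by (auto simp: pp_def)
  have r: "{v\<in>{1..n}. v \<notin> Range R \<and> v \<noteq> a \<and> (a = 0 \<or> v < a)} = {v\<in>pv n R. v < a}" using a0 by (auto simp: pv_def)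
  have c: "{i\<in>{1..n}. i \<notin> Domain R \<and> i \<noteq> b \<and> (b = 0 \<or> i < b)} = {i\<in>pp n R. i < b}" using b0 by (auto simp: pp_def)
  have ce: "card e.E = card R + 2" using e.card_ext a0 b0 by simp
  show ?thesis using matching_card[OF M] a0 b0 unfolding Gx_def e.wt_ext r c ce rk_def
    by auto
qed


lemma rank_sum':
  fixes q :: "'a::comm_semiring_1"
  assumes "finite P"
  shows "(\<Sum>w\<in>P. q ^ rk P w) = qint q (card P)"
  using rank_sum[OF assms] by (simp add: rk_def)

lemma inner_sum:
  assumes M: "matching n R"
  defines "h \<equiv> n - card R"
  shows "(\<Sum>ch\<in>Ch n R. Gx x y q n k R ch) = wt x y q n R *
     ((if h + 1 = k then x * q ^ (2 * h + 1) else 0)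
      + (if h = k then y * q ^ (2 * h) + (1 + x) * q ^ h * qint q h else 0)
      + (if h = k + 1 then qint q h * qint q h else 0))"
proof -
  let ?G = "Gx x y q n k R"
  let ?w = "wt x y q n R"
  have fv: "finite (pv n R)" and fp: "finite (pp n R)" using finite_subset[OF pv_sub] finite_subset[OF pp_sub] by auto
  have cv: "card (pv n R) = h" and cp: "card (pp n R) = h" using matching_card[OF M] by (simp_all add: h_def)
  have v0: "0 \<notin> pv n R" and p0: "0 \<notin> pp n R" by (auto simp: pv_def pp_def)
  have mn: "(Suc n, Suc n) \<notin> insert 0 (pv n R) \<times> insert 0 (pp n R)" using pv_sub[of n R] by auto
  have "(\<Sum>ch\<in>Ch n R. ?G ch) = ?G (Suc n, Suc n) + (\<Sum>ch\<in>insert 0 (pv n R) \<times> insert 0 (pp n R). ?G ch)"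
    unfolding Ch_def using mn fv fp by (simp add: sum.insert)
  also have "(\<Sum>ch\<in>insert 0 (pv n R) \<times> insert 0 (pp n R). ?G ch)
      = (\<Sum>a\<in>insert 0 (pv n R). \<Sum>b\<in>insert 0 (pp n R). ?G (a, b))"
    by (simp add: sum.cartesian_product)
  also have "\<dots> = (?G (0,0) + (\<Sum>b\<in>pp n R. ?G (0, b))) + (\<Sum>a\<in>pv n R. ?G (a, 0) + (\<Sum>b\<in>pp n R. ?G (a, b)))"
    using fv fp v0 p0 by (simp add: sum.insert)
  also have "(\<Sum>b\<in>pp n R. ?G (0, b)) = (\<Sum>b\<in>pp n R. if h = k then ?w * x * q ^ h * q ^ rk (pp n R) b else 0)"
    by (rule sum.cong) (simp_all add: piece_0b[OF M] h_def power_add mult.assoc)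
  also have "\<dots> = (if h = k then ?w * x * q ^ h * qint q h else 0)"
    using rank_sum'[OF fp, of q] cp by (simp add: sum_distrib_left[symmetric])
  also have "(\<Sum>a\<in>pv n R. ?G (a, 0) + (\<Sum>b\<in>pp n R. ?G (a, b)))
     = (\<Sum>a\<in>pv n R. (if h = k then ?w * q ^ h * q ^ rk (pv n R) a else 0)
          + (if h = k + 1 then ?w * q ^ rk (pv n R) a * (\<Sum>b\<in>pp n R. q ^ rk (pp n R) b) else 0))"
  proof (rule sum.cong)
    fix a assume a: "a \<in> pv n R"
    have "(\<Sum>b\<in>pp n R. ?G (a, b)) = (\<Sum>b\<in>pp n R. if h = k + 1 then ?w * q ^ rk (pv n R) a * q ^ rk (pp n R) b else 0)"
      by (rule sum.cong) (simp_all add: piece_ab[OF M a] h_def power_add mult.assoc)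
    also have "\<dots> = (if h = k + 1 then ?w * q ^ rk (pv n R) a * (\<Sum>b\<in>pp n R. q ^ rk (pp n R) b) else 0)"
      by (simp add: sum_distrib_left)
    finally show "?G (a, 0) + (\<Sum>b\<in>pp n R. ?G (a, b)) = (if h = k then ?w * q ^ h * q ^ rk (pv n R) a else 0)
          + (if h = k + 1 then ?w * q ^ rk (pv n R) a * (\<Sum>b\<in>pp n R. q ^ rk (pp n R) b) else 0)"
      by (simp add: piece_a0[OF M a] h_def power_add mult_ac)
  qed simp
  also have "\<dots> = (if h = k then ?w * q ^ h * qint q h else 0) + (if h = k + 1 then ?w * qint q h * qint q h else 0)"
    using rank_sum'[OF fp, of q] rank_sum'[OF fv, of q] cp cv
    by (simp add: sum.distrib sum_distrib_left[symmetric] sum_distrib_right[symmetric] mult.assoc)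
  finally show ?thesis
    unfolding piece_mm[OF M] piece_00[OF M] h_def[symmetric]
    by (simp add: algebra_simps)
qed


definition Sw :: "'a::comm_ring_1 \<Rightarrow> 'a \<Rightarrow> 'a \<Rightarrow> nat \<Rightarrow> nat \<Rightarrow> 'a" where
  "Sw x y q n k = (\<Sum>R\<in>PM n. if card R + k = n then wt x y q n R else 0)"

lemma Sw_Suc:
  "Sw x y q (Suc n) k = (if k = 0 then 0 else x * q ^ (2 * (k - 1) + 1) * Sw x y q n (k - 1))
     + (y * q ^ (2 * k) + (1 + x) * q ^ k * qint q k) * Sw x y q n k
     + (qint q (Suc k) * qint q (Suc k)) * Sw x y q n (Suc k)"
proof -
  let ?g = "\<lambda>R. if card R + k = Suc n then wt x y q (Suc n) R else 0"
  let ?w = "wt x y q n"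
  have "Sw x y q (Suc n) k = (\<Sum>(R,ch)\<in>Sigma (PM n) (Ch n). ?g (ext (Suc n) R ch))"
    unfolding Sw_def by (rule sum_PM_Suc)
  also have "\<dots> = (\<Sum>R\<in>PM n. \<Sum>ch\<in>Ch n R. Gx x y q n k R ch)"
    unfolding Gx_def using finite_PM finite_Ch by (simp add: sum.Sigma)
  also have "\<dots> = (\<Sum>R\<in>PM n. (if k = 0 then 0 else x * q ^ (2 * (k - 1) + 1) * (if card R + (k - 1) = n then ?w R else 0))
     + (y * q ^ (2 * k) + (1 + x) * q ^ k * qint q k) * (if card R + k = n then ?w R else 0)
     + (qint q (Suc k) * qint q (Suc k)) * (if card R + Suc k = n then ?w R else 0))"
  proof (rule sum.cong)
    fix R assume "R \<in> PM n"
    then have M: "matching n R" by (simp add: PM_def)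
    have le: "card R \<le> n" using matching_card[OF M] by simp
    show "(\<Sum>ch\<in>Ch n R. Gx x y q n k R ch) = (if k = 0 then 0 else x * q ^ (2 * (k - 1) + 1) * (if card R + (k - 1) = n then ?w R else 0))
     + (y * q ^ (2 * k) + (1 + x) * q ^ k * qint q k) * (if card R + k = n then ?w R else 0)
     + (qint q (Suc k) * qint q (Suc k)) * (if card R + Suc k = n then ?w R else 0)"
      unfolding inner_sum[OF M]
    proof -
      define h where "h = n - card R"
      have e1: "(h + 1 = k) \<longleftrightarrow> (k \<noteq> 0 \<and> card R + (k - 1) = n)" using le by (auto simp: h_def)
      have e2: "(h = k) \<longleftrightarrow> (card R + k = n)" using le by (auto simp: h_def)
      have e3: "(h = k + 1) \<longleftrightarrow> (card R + Suc k = n)" using le by (auto simp: h_def)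
      show "?w R * ((if n - card R + 1 = k then x * q ^ (2 * (n - card R) + 1) else 0) +
          (if n - card R = k then y * q ^ (2 * (n - card R)) + (1 + x) * q ^ (n - card R) * qint q (n - card R) else 0) +
          (if n - card R = k + 1 then qint q (n - card R) * qint q (n - card R) else 0)) =
        (if k = 0 then 0 else x * q ^ (2 * (k - 1) + 1) * (if card R + (k - 1) = n then ?w R else 0)) +
        (y * q ^ (2 * k) + (1 + x) * q ^ k * qint q k) * (if card R + k = n then ?w R else 0) +
        qint q (Suc k) * qint q (Suc k) * (if card R + Suc k = n then ?w R else 0)"
        unfolding h_def[symmetric] using e1 e2 e3
        by (cases "h + 1 = k"; cases "h = k"; cases "h = k + 1") (auto simp: algebra_simps)
    qed
  qed simp
  also have "\<dots> = (if k = 0 then 0 else x * q ^ (2 * (k - 1) + 1) * Sw x y q n (k - 1))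
     + (y * q ^ (2 * k) + (1 + x) * q ^ k * qint q k) * Sw x y q n k
     + (qint q (Suc k) * qint q (Suc k)) * Sw x y q n (Suc k)"
    unfolding Sw_def by (simp add: sum.distrib sum_distrib_left)
  finally show ?thesis .
qed

lemma Sw_0: "Sw x y q 0 k = (if k = 0 then 1 else 0)"
proof -
  have "PM 0 = {{}}" by (auto simp: PM_def matching_def)
  then show ?thesis by (simp add: Sw_def wt_def cexc_def cfix_def cinv_def)
qed

lemma Sw_Pm:
  fixes x y q :: "'a::comm_ring_1"
  shows "Sw x y q n k = Pm (\<lambda>h. x * q ^ (2 * h + 1)) (\<lambda>h. y * q ^ (2 * h) + (1 + x) * q ^ h * qint q h)
       (\<lambda>h. qint q h * qint q h) n k"
proof (induction n arbitrary: k)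
  case 0
  then show ?case by (simp add: Sw_0)
next
  case (Suc n)
  show ?case unfolding Sw_Suc Pm.simps Suc.IH by simp
qed



definition graph :: "nat \<Rightarrow> (nat \<Rightarrow> nat) \<Rightarrow> (nat \<times> nat) set" where
  "graph n s = (\<lambda>i. (i, s i)) ` {1..n}"

lemma graph_mem: "(i,u) \<in> graph n s \<longleftrightarrow> i \<in> {1..n} \<and> u = s i"
  by (auto simp: graph_def)

lemma perm_surj_on:
  assumes P: "s permutes {1..n}" and v: "v \<in> {1..n}"
  obtains j where "j \<in> {1..n}" "s j = v"
proof -
  have "s ` {1..n} = {1..n}" using permutes_image[OF P] .
  then show ?thesis using v that by force
qed

lemma graph_matching:
  assumes P: "s permutes {1..n}"
  shows "matching n (graph n s)" "card (graph n s) = n"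
proof -
  have inS: "i \<in> {1..n} \<Longrightarrow> s i \<in> {1..n}" for i using permutes_in_image[OF P] by blast
  have inj: "inj s" using permutes_inj[OF P] .
  have sub: "graph n s \<subseteq> {1..n} \<times> {1..n}" using inS by (auto simp: graph_def)
  show "matching n (graph n s)" unfolding matching_def
    using sub inj by (auto simp: graph_mem dest: injD)
  have "card (graph n s) = card {1..n}" unfolding graph_def by (rule card_image) (simp add: inj_on_def)
  then show "card (graph n s) = n" by simp
qed

lemma graph_gtv:
  assumes "i \<in> {1..n}" shows "gtv (graph n s) i v \<longleftrightarrow> v < s i"
  using assms unfolding gtv_def Domain_iff graph_mem by auto

lemma graph_gti:
  assumes P: "s permutes {1..n}" and v: "v \<in> {1..n}"
  shows "gti (graph n s) v i \<longleftrightarrow> (\<exists>j\<in>{1..n}. s j = v \<and> i < j)"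
proof -
  obtain j where "j \<in> {1..n}" "s j = v" using perm_surj_on[OF P v] .
  then have "v \<in> Range (graph n s)" unfolding Range_iff graph_mem by auto
  then have "gti (graph n s) v i \<longleftrightarrow> (\<exists>j. (j,v) \<in> graph n s \<and> i < j)" by (simp add: gti_def)
  also have "\<dots> \<longleftrightarrow> (\<exists>j\<in>{1..n}. s j = v \<and> i < j)" unfolding graph_mem by blast
  finally show ?thesis .
qed

lemma wt_graph:
  assumes P: "s permutes {1..n}"
  shows "wt x y q n (graph n s) = x ^ exc n s * y ^ fixpts n s * q ^ Defs.inv n s"
proof -
  have e: "cexc n (graph n s) = exc n s" unfolding cexc_def exc_def
    by (rule arg_cong[where f=card]) (auto simp: graph_gtv)
  have f: "cfix n (graph n s) = fixpts n s" unfolding cfix_def fixpts_def graph_mem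
    by (rule arg_cong[where f=card]) auto
  have inj: "inj s" using permutes_inj[OF P] .
  have inS: "i \<in> {1..n} \<Longrightarrow> s i \<in> {1..n}" for i using permutes_in_image[OF P] by blast
  let ?I = "{(i, j). i \<in> {1..n} \<and> j \<in> {1..n} \<and> i < j \<and> s i > s j}"
  let ?C = "{p\<in>{1..n}\<times>{1..n}. gtv (graph n s) (fst p) (snd p) \<and> gti (graph n s) (snd p) (fst p)}"
  have C: "?C = (\<lambda>(i,j). (i, s j)) ` ?I"
  proof (rule set_eqI, rule iffI)
    fix p assume p: "p \<in> ?C"
    obtain i v where pe: "p = (i,v)" by (cases p) auto
    have iv: "i \<in> {1..n}" "v \<in> {1..n}" using p pe by auto
    have "v < s i" using p pe iv graph_gtv by auto
    moreover obtain j where "j \<in> {1..n}" "s j = v" "i < j" using p pe iv graph_gti[OF P] by auto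
    ultimately show "p \<in> (\<lambda>(i,j). (i, s j)) ` ?I" using pe iv by force
  next
    fix p assume "p \<in> (\<lambda>(i,j). (i, s j)) ` ?I"
    then obtain i j where ij: "p = (i, s j)" "i \<in> {1..n}" "j \<in> {1..n}" "i < j" "s i > s j" by auto
    then show "p \<in> ?C" using graph_gtv graph_gti[OF P] inS by auto
  qed
  have "card ?C = card ?I" unfolding C
    by (rule card_image) (use inj in \<open>auto simp: inj_on_def dest: injD\<close>)
  then have i: "cinv n (graph n s) = Defs.inv n s" unfolding cinv_def Defs.inv_def by simp
  show ?thesis unfolding wt_def e f i ..
qed


lemma full_matching:
  assumes M: "matching n R" and c: "card R = n"
  shows "Domain R = {1..n}" "Range R = {1..n}"
proof -
  have sub: "R \<subseteq> {1..n}\<times>{1..n}" using M by (simp add: matching_def)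
  have injf: "inj_on fst R" using matchingD(2)[OF M] by (auto simp: inj_on_def)
  have injs: "inj_on snd R" using matchingD(3)[OF M] by (auto simp: inj_on_def)
  have cD: "card (Domain R) = n" using card_image[OF injf] c by (simp add: fst_eq_Domain)
  have cR: "card (Range R) = n" using card_image[OF injs] c by (simp add: snd_eq_Range)
  have sD: "Domain R \<subseteq> {1..n}" and sR: "Range R \<subseteq> {1..n}" using sub by auto
  show "Domain R = {1..n}" by (rule card_subset_eq) (use sD cD in auto)
  show "Range R = {1..n}" by (rule card_subset_eq) (use sR cR in auto)
qed

definition fun_of :: "nat \<Rightarrow> (nat \<times> nat) set \<Rightarrow> nat \<Rightarrow> nat" where
  "fun_of n R k = (if k \<in> {1..n} then THE v. (k,v) \<in> R else k)"

lemma fun_of_mem: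
  assumes M: "matching n R" and c: "card R = n" and k: "k \<in> {1..n}"
  shows "(k, fun_of n R k) \<in> R"
proof -
  obtain v where v: "(k,v) \<in> R" using full_matching(1)[OF M c] k by blast
  have "(THE v. (k,v) \<in> R) = v" by (rule the_equality) (use v matchingD(2)[OF M] in auto)
  then show ?thesis using v k by (simp add: fun_of_def)
qed

lemma fun_of_eq:
  assumes M: "matching n R" and c: "card R = n" and kv: "(k,v) \<in> R"
  shows "fun_of n R k = v"
proof -
  have k: "k \<in> {1..n}" using matchingD(1)[OF M kv] by simp
  show ?thesis using fun_of_mem[OF M c k] kv matchingD(2)[OF M] by blast
qed

lemma Sw_perm:
  "Sw x y q n 0 = (\<Sum>\<sigma> \<in> {\<sigma>. \<sigma> permutes {1..n}}. x ^ exc n \<sigma> * y ^ fixpts n \<sigma> * q ^ Defs.inv n \<sigma>)"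
proof -
  have "Sw x y q n 0 = (\<Sum>R\<in>{R\<in>PM n. card R = n}. wt x y q n R)"
    unfolding Sw_def using finite_PM by (simp add: sum.inter_filter)
  also have "\<dots> = (\<Sum>\<sigma> \<in> {\<sigma>. \<sigma> permutes {1..n}}. x ^ exc n \<sigma> * y ^ fixpts n \<sigma> * q ^ Defs.inv n \<sigma>)"
  proof (rule sym, rule sum.reindex_bij_witness[where j = "graph n" and i = "fun_of n"])
    fix s assume s: "s \<in> {\<sigma>. \<sigma> permutes {1..n}}"
    then have P: "s permutes {1..n}" by simp
    show "fun_of n (graph n s) = s"
    proof
      fix k show "fun_of n (graph n s) k = s k"
      proof (cases "k \<in> {1..n}")
        case True
        then show ?thesis using fun_of_eq[OF graph_matching[OF P], of k "s k"] by (simp add: graph_mem)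
      next
        case False
        have "fun_of n (graph n s) k = k" unfolding fun_of_def by (subst if_not_P[OF False]) (rule refl)
        then show ?thesis using permutes_not_in[OF P False] by simp
      qed
    qed
    show "graph n s \<in> {R\<in>PM n. card R = n}" using graph_matching[OF P] by (simp add: PM_def)
    show "wt x y q n (graph n s) = x ^ exc n s * y ^ fixpts n s * q ^ Defs.inv n s" by (rule wt_graph[OF P])
  next
    fix R assume R: "R \<in> {R\<in>PM n. card R = n}"
    then have M: "matching n R" and c: "card R = n" by (auto simp: PM_def)
    show "graph n (fun_of n R) = R"
    proof (rule set_eqI)
      fix p :: "nat \<times> nat"
      obtain k v where pe: "p = (k,v)" by (cases p) auto
      show "p \<in> graph n (fun_of n R) \<longleftrightarrow> p \<in> R"
        unfolding pe graph_mem using fun_of_mem[OF M c] fun_of_eq[OF M c] matchingD(1)[OF M] by blast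
    qed
    have inj: "inj_on (fun_of n R) {1..n}"
    proof (rule inj_onI)
      fix k1 k2 assume "k1 \<in> {1..n}" "k2 \<in> {1..n}" "fun_of n R k1 = fun_of n R k2"
      then show "k1 = k2" using fun_of_mem[OF M c] matchingD(3)[OF M] by metis
    qed
    have img: "fun_of n R ` {1..n} = {1..n}"
    proof
      show "fun_of n R ` {1..n} \<subseteq> {1..n}" using fun_of_mem[OF M c] matchingD(1)[OF M] by blast
      show "{1..n} \<subseteq> fun_of n R ` {1..n}"
      proof
        fix v assume "v \<in> {1..n}"
        then obtain k where kv: "(k,v) \<in> R" using full_matching(2)[OF M c] by blast
        then have "k \<in> {1..n}" using matchingD(1)[OF M] by blast
        then show "v \<in> fun_of n R ` {1..n}" using fun_of_eq[OF M c kv] by force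
      qed
    qed
    have "fun_of n R permutes {1..n}"
      by (rule bij_imp_permutes) (use inj img in \<open>auto simp: bij_betw_def fun_of_def\<close>)
    then show "fun_of n R \<in> {\<sigma>. \<sigma> permutes {1..n}}" by simp
  qed
  finally show ?thesis .
qed


theorem corollary4p2:
  fixes x y q :: "'a::field"
  defines "a \<equiv> (\<lambda>h. x * q ^ h * qint q (h + 1))"
      and "b \<equiv> (\<lambda>h. y * q ^ (2 * h) + (1 + x) * q ^ h * qint q h)"
      and "c \<equiv> (\<lambda>h. q ^ h * qint q h)"
  shows "(\<lambda>k. jconv b (\<lambda>h. a (h - 1) * c h) k 0) \<longlonglongrightarrow>
           Abs_fps (\<lambda>n. if n = 0 then 1
                         else (\<Sum>\<sigma> \<in> {\<sigma>. \<sigma> permutes {1..n}}.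
                                 x ^ exc n \<sigma> * y ^ fixpts n \<sigma> * q ^ inv n \<sigma>))"
proof (rule fps_tendsto_coeffs)
  fix k n :: nat assume nk: "n < k"
  let ?a' = "\<lambda>h. x * q ^ (2 * h + 1)"
  let ?c' = "\<lambda>h. qint q h * qint q h"
  have lam: "(\<lambda>h. a (h - 1) * c h) (Suc h) = ?a' h * ?c' (Suc h)" for h
  proof -
    have "q ^ h * q ^ Suc h = q ^ (2 * h + 1)" by (simp add: power_add[symmetric] mult_2)
    then show ?thesis unfolding a_def c_def
      by (simp add: mult_ac) (metis (no_types, lifting) mult.assoc mult.left_commute)
  qed
  have "fps_nth (jconv b (\<lambda>h. a (h - 1) * c h) k 0) n = Pm ?a' b ?c' n 0"
    by (rule jconv_coeff[where a = "?a'" and c = "?c'", OF lam nk])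
  also have "\<dots> = Sw x y q n 0" unfolding b_def by (rule Sw_Pm[symmetric])
  also have "\<dots> = (if n = 0 then 1 else (\<Sum>\<sigma> \<in> {\<sigma>. \<sigma> permutes {1..n}}.
                                 x ^ exc n \<sigma> * y ^ fixpts n \<sigma> * q ^ inv n \<sigma>))"
    using Sw_perm[of x y q n] Sw_0[of x y q 0] by auto
  finally show "fps_nth (jconv b (\<lambda>h. a (h - 1) * c h) k 0) n = fps_nth (Abs_fps (\<lambda>n. if n = 0 then 1
                         else (\<Sum>\<sigma> \<in> {\<sigma>. \<sigma> permutes {1..n}}.
                                 x ^ exc n \<sigma> * y ^ fixpts n \<sigma> * q ^ inv n \<sigma>))) n" by simp
qed

end
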